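(* Let $$A_n= \sum_{0\le j,k \le n}\binom{n}{j}^2\binom{n}{k}^2\binom{n+j}{n}\binom{n+k}{n}\binom{j+k}{n}\quad (n\ge 0),\qquad w_0(z)=\sum_{n=0}^{\infty} A_n z^n\in\mathbb{Z}[[z]].$$ Then for every integer $n\ge 1$ one has $v_2(A_n)\ge 2$. In particular $w_0(z)\equiv 1 \pmod 4$ (coefficientwise), and there exists a power series $u_0(z)\in\mathbb{Z}[[z]]$ such that $w_0(z)=u_0(z)^2$.
   Context: $v_2$ denotes the $2$-adic valuation on the integers, with $v_2(0)=+\infty$. Note $A_0=1$. *)

theory Defs
  imports "HOL-Computational_Algebra.Computational_Algebra" "HOL-Library.Extended_Nat"
begin

definition v2 :: "int \<Rightarrow> enat" where
  "v2 x = (if x = 0 then \<infinity> else enat (multiplicity (2::int) x))"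

definition A :: "nat \<Rightarrow> int" where
  "A n = (\<Sum>j\<le>n. \<Sum>k\<le>n.
      int ((n choose j)^2 * (n choose k)^2 * ((n + j) choose n) * ((n + k) choose n)
           * ((j + k) choose n)))"

definition w0 :: "int fps" where
  "w0 = Abs_fps A"

end

theory Submission
  imports Defs
begin

lemma central_even: "j \<ge> 1 \<Longrightarrow> even ((2*j) choose j)"
proof -
  assume "j \<ge> 1"
  then obtain m where m: "j = Suc m" by (cases j) auto
  have s: "(Suc (2*m) choose Suc m) = (Suc (2*m) choose m)"
    using binomial_symmetric[of m "Suc (2*m)"] by (simp add: Suc_diff_le)
  have "(2*j choose j) = (Suc (2*m) choose m) + (Suc (2*m) choose Suc m)"
    by (simp add: m)
  thus ?thesis using s by simp
qed

definition B :: "nat \<Rightarrow> nat \<Rightarrow> nat" where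
  "B n j = (n choose j)^2 * ((n + j) choose n)"

lemma B_even: assumes "1 \<le> j" "j \<le> n" shows "even (B n j)"
proof -
  have "((n + j) choose (2*j)) * ((2*j) choose j) = ((n+j) choose j) * ((n + j - j) choose (2*j - j))"
    by (rule choose_mult) (use assms in auto)
  also have "\<dots> = ((n+j) choose n) * (n choose j)"
    using binomial_symmetric[of j "n+j"] by simp
  finally have e: "((n + j) choose (2*j)) * ((2*j) choose j) = ((n+j) choose n) * (n choose j)" .
  have "B n j = (n choose j) * (((n+j) choose n) * (n choose j))"
    by (simp add: B_def power2_eq_square)
  also have "\<dots> = (n choose j) * (((n + j) choose (2*j)) * ((2*j) choose j))" using e by simp
  finally show ?thesis using central_even[OF assms(1)] by simp
qed

lemma A_B: "A n = (\<Sum>j\<le>n. \<Sum>k\<le>n. int (B n j * B n k * ((j + k) choose n)))"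
  unfolding A_def B_def by (simp add: algebra_simps)

lemma A4: assumes "n \<ge> 1" shows "4 dvd A n"
proof -
  have U: "{..n} = insert 0 {1..n}" by auto
  define f where "f j k = int (B n j * B n k * ((j + k) choose n))" for j k
  have B0: "B n 0 = 1" by (simp add: B_def)
  have row0: "(\<Sum>k\<in>{1..n}. f 0 k) = int (B n n)"
  proof -
    have "(\<Sum>k\<in>{1..n}. f 0 k) = (\<Sum>k\<in>{1..n}. if k = n then int (B n n) else 0)"
      by (rule sum.cong) (auto simp: f_def B0)
    also have "\<dots> = int (B n n)" using assms by (simp add: sum.delta')
    finally show ?thesis .
  qed
  have col0: "(\<Sum>j\<in>{1..n}. f j 0) = int (B n n)"
  proof -
    have "(\<Sum>j\<in>{1..n}. f j 0) = (\<Sum>j\<in>{1..n}. if j = n then int (B n n) else 0)"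
      by (rule sum.cong) (auto simp: f_def B0)
    also have "\<dots> = int (B n n)" using assms by (simp add: sum.delta')
    finally show ?thesis .
  qed
  have f00: "f 0 0 = 0" using assms by (simp add: f_def)
  have inner: "4 dvd (\<Sum>j\<in>{1..n}. \<Sum>k\<in>{1..n}. f j k)"
  proof (intro dvd_sum)
    fix j k assume "j \<in> {1..n}" "k \<in> {1..n}"
    then have "even (B n j)" "even (B n k)" using B_even by auto
    then obtain a b where "B n j = 2*a" "B n k = 2*b" by (auto elim!: evenE)
    thus "4 dvd f j k" unfolding f_def by (simp add: algebra_simps)
  qed
  have "A n = (\<Sum>j\<in>insert 0 {1..n}. \<Sum>k\<in>insert 0 {1..n}. f j k)"
    unfolding A_B f_def U[symmetric] by simp
  also have "\<dots> = f 0 0 + (\<Sum>k\<in>{1..n}. f 0 k) + (\<Sum>j\<in>{1..n}. f j 0)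
                  + (\<Sum>j\<in>{1..n}. \<Sum>k\<in>{1..n}. f j k)"
    by (simp add: sum.distrib)
  also have "\<dots> = 2 * int (B n n) + (\<Sum>j\<in>{1..n}. \<Sum>k\<in>{1..n}. f j k)"
    using row0 col0 f00 by simp
  finally have eq: "A n = 2 * int (B n n) + (\<Sum>j\<in>{1..n}. \<Sum>k\<in>{1..n}. f j k)" .
  have "even (B n n)" using B_even assms by auto
  then obtain c where "B n n = 2*c" by (auto elim!: evenE)
  thus ?thesis using eq inner by simp
qed

lemma A0: "A 0 = 1" by (simp add: A_def)

fun u :: "nat \<Rightarrow> int" where
  "u n = (if n = 0 then 1 else (A n - (\<Sum>i\<in>{1..<n}. u i * u (n - i))) div 2)"

declare u.simps[simp del]

lemma u_props: "n \<ge> 1 \<Longrightarrow> even (u n) \<and> 2 * u n = A n - (\<Sum>i\<in>{1..<n}. u i * u (n - i))"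
proof (induction n rule: less_induct)
  case (less n)
  have "4 dvd (\<Sum>i\<in>{1..<n}. u i * u (n - i))"
  proof (rule dvd_sum)
    fix i assume i: "i \<in> {1..<n}"
    then have "even (u i)" "even (u (n - i))" using less by auto
    then obtain a b where "u i = 2*a" "u (n-i) = 2*b" by (auto elim!: evenE)
    thus "4 dvd u i * u (n - i)" by simp
  qed
  then have d: "4 dvd A n - (\<Sum>i\<in>{1..<n}. u i * u (n - i))" using A4 less.prems by simp
  then obtain c where c: "A n - (\<Sum>i\<in>{1..<n}. u i * u (n - i)) = 4 * c" by blast
  have "u n = 2 * c" using less.prems c by (subst u.simps) simp
  thus ?case using c by simp
qed

theorem mainTheorem2:
  shows "(\<forall>n::nat. n \<ge> 1 \<longrightarrow> v2 (A n) \<ge> 2)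
       \<and> (\<forall>n::nat. fps_nth w0 n mod 4 = fps_nth (1::int fps) n mod 4)
       \<and> (\<exists>u0 :: int fps. w0 = u0 ^ 2)"
proof (intro conjI allI impI)
  fix n :: nat assume n: "n \<ge> 1"
  show "v2 (A n) \<ge> 2"
  proof (cases "A n = 0")
    case True thus ?thesis by (simp add: v2_def)
  next
    case False
    have "(2::int)^2 dvd A n" using A4[OF n] by simp
    then have "multiplicity 2 (A n) \<ge> 2" using multiplicity_geI[of "A n" "2::int" 2] False by simp
    thus ?thesis using False by (simp add: v2_def)
  qed
next
  fix n :: nat
  show "fps_nth w0 n mod 4 = fps_nth (1::int fps) n mod 4"
  proof (cases "n = 0")
    case True thus ?thesis by (simp add: w0_def A0)
  next
    case False
    then have "4 dvd A n" using A4 by simp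
    thus ?thesis using False by (simp add: w0_def)
  qed
next
  show "\<exists>u0 :: int fps. w0 = u0 ^ 2"
  proof (intro exI fps_ext)
    fix n
    have u0: "u 0 = 1" by (simp add: u.simps)
    show "w0 $ n = (Abs_fps u ^ 2) $ n"
    proof (cases "n = 0")
      case True thus ?thesis by (simp add: w0_def power2_eq_square A0 u0)
    next
      case False
      have "(Abs_fps u ^ 2) $ n = (\<Sum>i=0..n. u i * u (n - i))"
        by (simp add: power2_eq_square fps_mult_nth)
      also have "\<dots> = u 0 * u n + (\<Sum>i\<in>{1..<n}. u i * u (n - i)) + u n * u 0"
      proof -
        have "{0..n} = insert 0 (insert n {1..<n})" using False by auto
        thus ?thesis using False by (simp add: add.commute add.left_commute)
      qed
      also have "\<dots> = A n" using u_props[of n] False u0 by simp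
      finally show ?thesis by (simp add: w0_def)
    qed
  qed
qed

end
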